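(* Under the standing assumptions below, the closure $\overline{\mathcal P_1}$ is a perfect set; consequently $\overline{\mathcal P_1}$ is uncountable and $\overline{\mathcal P_1}\setminus\mathcal P_1$ is uncountable.
   Context: Fix $\rho_1,\rho_2,\rho_3\in(0,1)$ with $\rho_1+\rho_2+\rho_3>1$ and $\rho_i+\rho_j\le1$ for all $i\ne j$; $\mu_i=1$, $\theta:=\rho_1+\rho_2+\rho_3-1$. $A_i^0:=\{y\in\mathbb R^3: y_1+y_2+y_3=1, y_i=0, y_l\ge0\}$, $A^0:=\bigcup_iA_i^0$; for $z\in A^0\setminus A_j^0$, $f_j(z):=\sum_{i\neq j}\frac{(1-\rho_j)z_i+\rho_i z_j}{(1-\rho_j)+\theta z_j}e_i$. For $(\hat i,\hat j,\hat k)$ equal to $(1,2,3)$ or a cyclic permutation, $(1-x)e_{\hat j}+xe_{\hat k}\in A^0_{\hat i}$ is written $(x,\hat i)$. Decision points $d_1,d_2,d_3\in(0,1)$ (identified with $(d_{\hat i},\hat i)$); switching rule $\mathfrak R((x,\hat i))=\hat j$ if $x<d_{\hat i}$, $\hat k$ if $x>d_{\hat i}$, both allowed if $x=d_{\hat i}$; $\varphi(z):=f_{\mathfrak R(z)}(z)$. A trajectory is $(z(t))$ with $z(t+1)\in\varphi(z(t))$; $z$ is a pre-image of $z'$ if some trajectory from $z$ has $z(t)=z'$ for some $t\ge1$. Standing assumption: $d_1$ has infinitely many distinct pre-images, while $d_2$ and $d_3$ have only finitely many. $\mathcal P_1$ is the set consisting of $d_1$ and all its pre-images; closure is with respect to the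 Euclidean topology on $A^0$. *)

theory Defs
  imports "HOL-Analysis.Analysis"
begin

text \<open>Points of R^3 are vectors of type real^3; indices are elements of the numeral
type 3, whose elements 1, 2, 3 are the three coordinates (3 = 0 in this type, so that
index arithmetic is cyclic: i+1, i+2 give the cyclic successors).\<close>

definition theta :: "(3 \<Rightarrow> real) \<Rightarrow> real" where
  "theta rho = rho 1 + rho 2 + rho 3 - 1"

definition A0i :: "3 \<Rightarrow> (real^3) set" where
  "A0i i = {y. y$1 + y$2 + y$3 = 1 \<and> y$i = 0 \<and> (\<forall>l. y$l \<ge> 0)}"

definition A0 :: "(real^3) set" where
  "A0 = (\<Union>i. A0i i)"

text \<open>The map f_j (only used for z in A0 - A0i j).\<close>
definition fmap :: "(3 \<Rightarrow> real) \<Rightarrow> 3 \<Rightarrow> real^3 \<Rightarrow> real^3" where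
  "fmap rho j z = (\<chi> i. if i = j then 0 else
      ((1 - rho j) * z$i + rho i * z$j) / ((1 - rho j) + theta rho * z$j))"

definition pt :: "real \<Rightarrow> 3 \<Rightarrow> real^3" where
  "pt x i = (1 - x) *\<^sub>R axis (i + 1) 1 + x *\<^sub>R axis (i + 2) 1"

text \<open>Switching rule as a relation: rule d z j means j is an allowed value of R(z).\<close>
definition rule :: "(3 \<Rightarrow> real) \<Rightarrow> real^3 \<Rightarrow> 3 \<Rightarrow> bool" where
  "rule d z j \<longleftrightarrow> (\<exists>i x. 0 \<le> x \<and> x \<le> 1 \<and> z = pt x i \<and>
      ((x < d i \<and> j = i + 1) \<or> (x > d i \<and> j = i + 2) \<or>
       (x = d i \<and> (j = i + 1 \<or> j = i + 2))))"

definition phi :: "(3 \<Rightarrow> real) \<Rightarrow> (3 \<Rightarrow> real) \<Rightarrow> real^3 \<Rightarrow> (real^3) set" where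
  "phi rho d z = {fmap rho j z | j. rule d z j}"

definition trajectory :: "(3 \<Rightarrow> real) \<Rightarrow> (3 \<Rightarrow> real) \<Rightarrow> (nat \<Rightarrow> real^3) \<Rightarrow> bool" where
  "trajectory rho d zs \<longleftrightarrow> (\<forall>t. zs (Suc t) \<in> phi rho d (zs t))"

definition preimage :: "(3 \<Rightarrow> real) \<Rightarrow> (3 \<Rightarrow> real) \<Rightarrow> real^3 \<Rightarrow> real^3 \<Rightarrow> bool" where
  "preimage rho d z z' \<longleftrightarrow>
     (\<exists>zs t. trajectory rho d zs \<and> zs 0 = z \<and> t \<ge> 1 \<and> zs t = z')"

definition dpt :: "(3 \<Rightarrow> real) \<Rightarrow> 3 \<Rightarrow> real^3" where
  "dpt d i = pt (d i) i"

definition P1 :: "(3 \<Rightarrow> real) \<Rightarrow> (3 \<Rightarrow> real) \<Rightarrow> (real^3) set" where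
  "P1 rho d = insert (dpt d 1) {z. preimage rho d z (dpt d 1)}"

definition perfect_set :: "'a::topological_space set \<Rightarrow> bool" where
  "perfect_set S \<longleftrightarrow> closed S \<and> (\<forall>x\<in>S. x islimpt S)"

end

theory Submission
  imports Defs
begin


lemma n3: "(1::3)+1 = 2" "(1::3)+2 = 3" "(2::3)+1 = 3" "(2::3)+2 = 1" "(3::3)+1 = 1" "(3::3)+2 = 2" by simp_all

lemma idx_distinct[simp]: "(i::3) + 1 \<noteq> i" "(i::3) + 2 \<noteq> i" "(i::3)+1 \<noteq> i + 2" "(i::3) + 3 = i"
  "i \<noteq> i + 1" "i \<noteq> i + 2" "(i::3)+2 \<noteq> i + 1"
  "(i::3) + 1 + 1 = i + 2" "(i::3) + 1 + 2 = i" "(i::3) + 2 + 1 = i" "(i::3) + 2 + 2 = i + 1"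
  using exhaust_3[of i] by auto

lemma idx_cases: "(k::3) = i \<or> k = i + 1 \<or> k = i + 2"
  using exhaust_3[of i] exhaust_3[of k] by auto

lemma pt_nth: "pt x i $ k = (if k = i + 1 then 1 - x else if k = i + 2 then x else 0)"
  unfolding pt_def by (auto simp: axis_def)

lemma pt_nth_simps[simp]: "pt x i $ i = 0" "pt x i $ (i+1) = 1 - x" "pt x i $ (i+2) = x"
  by (auto simp: pt_nth)

lemma pt_inj_same: "pt x i = pt y i \<Longrightarrow> x = y"
  by (metis pt_nth_simps(3))

lemma pt_inj: assumes "pt x i = pt y e" "0 < x" "x < 1" shows "e = i \<and> y = x"
proof -
  have "e = i"
  proof (rule ccontr)
    assume "e \<noteq> i"
    then have "e = i + 1 \<or> e = i + 2" using idx_cases[of e i] by auto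
    then show False
    proof
      assume e: "e = i + 1"
      have "pt x i $ (i+1) = pt y e $ (i+1)" using assms(1) by simp
      then show False using e assms(2,3) by simp
    next
      assume e: "e = i + 2"
      have "pt x i $ (i+2) = pt y e $ (i+2)" using assms(1) by simp
      then show False using e assms(2,3) by simp
    qed
  qed
  then show ?thesis using pt_inj_same assms by auto
qed

lemma theta_i: "theta rho = rho i + rho (i+1) + rho (i+2) - 1"
  unfolding theta_def using exhaust_3[of i] by (auto simp only: n3)

locale sys =
  fixes rho d :: "3 \<Rightarrow> real"
  assumes rr: "\<And>i. 0 < rho i \<and> rho i < 1"
    and rs: "rho 1 + rho 2 + rho 3 > 1"
    and rp: "\<And>i j. i \<noteq> j \<Longrightarrow> rho i + rho j \<le> 1"
    and dr: "\<And>i. 0 < d i \<and> d i < 1"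
begin

definition g1 :: "3 \<Rightarrow> real \<Rightarrow> real" where
  "g1 i x = rho i * (1-x) / ((1 - rho (i+1)) + theta rho * (1-x))"
definition g2 :: "3 \<Rightarrow> real \<Rightarrow> real" where
  "g2 i x = 1 - rho i * x / ((1 - rho (i+2)) + theta rho * x)"

lemma th_pos: "theta rho > 0" using rs unfolding theta_def by simp

lemma rpi: "rho i \<le> 1 - rho (i+1)" "rho i \<le> 1 - rho (i+2)"
  using rp[of i "i+1"] rp[of i "i+2"] by auto

lemma D1_pos: "0 \<le> x \<Longrightarrow> x \<le> 1 \<Longrightarrow> (1 - rho (i+1)) + theta rho * (1-x) > 0"
  using rr[of "i+1"] th_pos by (simp add: add_pos_nonneg)
lemma D2_pos: "0 \<le> x \<Longrightarrow> x \<le> 1 \<Longrightarrow> (1 - rho (i+2)) + theta rho * x > 0"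
  using rr[of "i+2"] th_pos by (simp add: add_pos_nonneg)

lemma fmap1: assumes "0 \<le> x" "x \<le> 1"
  shows "fmap rho (i+1) (pt x i) = pt (g1 i x) (i+1)"
proof -
  let ?D = "(1 - rho (i+1)) + theta rho * (1-x)"
  have D: "?D > 0" using D1_pos assms by blast
  have th: "theta rho = rho i + rho (i+1) + rho (i+2) - 1" by (rule theta_i)
  show ?thesis
  proof (subst vec_eq_iff, intro allI)
    fix k
    consider "k = i" | "k = i + 1" | "k = i + 2" using idx_cases[of k i] by auto
    then show "fmap rho (i+1) (pt x i) $ k = pt (g1 i x) (i+1) $ k"
    proof cases
      case 1 then show ?thesis by (simp add: fmap_def pt_nth g1_def)
    next
      case 2 then show ?thesis by (simp add: fmap_def)
    next
      case 3 then show ?thesis using D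
        by (simp add: fmap_def pt_nth g1_def field_simps th)
    qed
  qed
qed

lemma fmap2: assumes "0 \<le> x" "x \<le> 1"
  shows "fmap rho (i+2) (pt x i) = pt (g2 i x) (i+2)"
proof -
  let ?D = "(1 - rho (i+2)) + theta rho * x"
  have D: "?D > 0" using D2_pos assms by blast
  have th: "theta rho = rho i + rho (i+1) + rho (i+2) - 1" by (rule theta_i)
  show ?thesis
  proof (subst vec_eq_iff, intro allI)
    fix k
    consider "k = i" | "k = i + 1" | "k = i + 2" using idx_cases[of k i] by auto
    then show "fmap rho (i+2) (pt x i) $ k = pt (g2 i x) (i+2) $ k"
    proof cases
      case 1 then show ?thesis using D by (simp add: fmap_def pt_nth g2_def field_simps)
    next
      case 2 then show ?thesis using D
        by (simp add: fmap_def pt_nth g2_def field_simps th)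
    next
      case 3 then show ?thesis by (simp add: fmap_def)
    qed
  qed
qed


definition step :: "real^3 \<Rightarrow> real^3 \<Rightarrow> bool" where
  "step z z' \<longleftrightarrow> z' \<in> phi rho d z"

lemma step_cases:
  assumes "step z z'"
  obtains i x where "0 \<le> x" "x \<le> 1" "z = pt x i"
     "(x \<le> d i \<and> z' = pt (g1 i x) (i+1)) \<or> (x \<ge> d i \<and> z' = pt (g2 i x) (i+2))"
proof -
  from assms obtain j where j: "z' = fmap rho j z" "rule d z j"
    unfolding step_def phi_def by auto
  from j(2) obtain i x where ix: "0 \<le> x" "x \<le> 1" "z = pt x i"
    "(x < d i \<and> j = i + 1) \<or> (x > d i \<and> j = i + 2) \<or> (x = d i \<and> (j = i + 1 \<or> j = i + 2))"
    unfolding rule_def by blast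
  have f1: "j = i + 1 \<Longrightarrow> z' = pt (g1 i x) (i+1)" using j(1) ix(3) fmap1[OF ix(1,2), of i] by simp
  have f2: "j = i + 2 \<Longrightarrow> z' = pt (g2 i x) (i+2)" using j(1) ix(3) fmap2[OF ix(1,2), of i] by simp
  from ix(4) have "(x \<le> d i \<and> z' = pt (g1 i x) (i+1)) \<or> (x \<ge> d i \<and> z' = pt (g2 i x) (i+2))"
  proof (elim disjE conjE)
    assume "x < d i" "j = i + 1" then show ?thesis using f1 by simp
  next
    assume "x > d i" "j = i + 2" then show ?thesis using f2 by simp
  next
    assume "x = d i" "j = i + 1" then show ?thesis using f1 by simp
  next
    assume "x = d i" "j = i + 2" then show ?thesis using f2 by simp
  qed
  then show ?thesis using that[OF ix(1,2,3)] by blast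
qed

lemma step_I1: assumes "0 \<le> x" "x \<le> 1" "x \<le> d i" shows "step (pt x i) (pt (g1 i x) (i+1))"
proof -
  have r: "rule d (pt x i) (i+1)" unfolding rule_def using assms
    by (intro exI[of _ i] exI[of _ x]) auto
  show ?thesis unfolding step_def phi_def using r fmap1[OF assms(1,2), of i] by force
qed

lemma step_I2: assumes "0 \<le> x" "x \<le> 1" "x \<ge> d i" shows "step (pt x i) (pt (g2 i x) (i+2))"
proof -
  have r: "rule d (pt x i) (i+2)" unfolding rule_def using assms
    by (intro exI[of _ i] exI[of _ x]) auto
  show ?thesis unfolding step_def phi_def using r fmap2[OF assms(1,2), of i] by force
qed

lemma step_lt: assumes "0 < x" "x < d i" "step (pt x i) z'" shows "z' = pt (g1 i x) (i+1)"
proof -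
  obtain i' x' where h: "0 \<le> x'" "x' \<le> 1" "pt x i = pt x' i'"
     "(x' \<le> d i' \<and> z' = pt (g1 i' x') (i'+1)) \<or> (x' \<ge> d i' \<and> z' = pt (g2 i' x') (i'+2))"
    by (rule step_cases[OF assms(3)])
  have "x < 1" using assms dr[of i] by linarith
  then have "i' = i \<and> x' = x" using pt_inj[OF h(3)] assms by auto
  then show ?thesis using h assms by auto
qed

lemma step_gt: assumes "x < 1" "x > d i" "step (pt x i) z'" shows "z' = pt (g2 i x) (i+2)"
proof -
  obtain i' x' where h: "0 \<le> x'" "x' \<le> 1" "pt x i = pt x' i'"
     "(x' \<le> d i' \<and> z' = pt (g1 i' x') (i'+1)) \<or> (x' \<ge> d i' \<and> z' = pt (g2 i' x') (i'+2))"
    by (rule step_cases[OF assms(3)])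
  have "x > 0" using assms dr[of i] by linarith
  then have "i' = i \<and> x' = x" using pt_inj[OF h(3)] assms by auto
  then show ?thesis using h assms by auto
qed

lemma g1_range: "0 \<le> x \<Longrightarrow> x < 1 \<Longrightarrow> 0 < g1 i x \<and> g1 i x < 1"
proof -
  assume x: "0 \<le> x" "x < 1"
  have D: "(1 - rho (i+1)) + theta rho * (1-x) > 0" using D1_pos x by simp
  have "rho i * (1-x) < (1 - rho (i+1)) + theta rho * (1-x)"
  proof -
    have "rho i * (1-x) \<le> (1 - rho (i+1)) * (1 - x)" using rpi(1)[of i] x
      by (intro mult_right_mono) auto
    also have "\<dots> \<le> (1 - rho (i+1))" using x rr[of "i+1"] by (intro mult_right_le_one_le) auto
    also have "\<dots> < (1 - rho (i+1)) + theta rho * (1-x)" using th_pos x by simp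
    finally show ?thesis .
  qed
  moreover have "0 < rho i * (1-x)" using x rr[of i] by simp
  ultimately show ?thesis using D unfolding g1_def by (simp add: divide_less_eq_1_pos divide_pos_pos)
qed

lemma g2_range: "0 < x \<Longrightarrow> x \<le> 1 \<Longrightarrow> 0 < g2 i x \<and> g2 i x < 1"
proof -
  assume x: "0 < x" "x \<le> 1"
  have D: "(1 - rho (i+2)) + theta rho * x > 0" using D2_pos x by simp
  have "rho i * x < (1 - rho (i+2)) + theta rho * x"
  proof -
    have "rho i * x \<le> (1 - rho (i+2)) * x" using rpi(2)[of i] x
      by (intro mult_right_mono) auto
    also have "\<dots> \<le> (1 - rho (i+2))" using x rr[of "i+2"] by (intro mult_right_le_one_le) auto
    also have "\<dots> < (1 - rho (i+2)) + theta rho * x" using x th_pos by simp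
    finally show ?thesis .
  qed
  moreover have "0 < rho i * x" using x rr[of i] by simp
  ultimately show ?thesis using D unfolding g2_def by (simp add: divide_less_eq_1_pos divide_pos_pos)
qed

lemma step_image: "step z z' \<Longrightarrow> \<exists>y e. 0 < y \<and> y < 1 \<and> z' = pt y e"
proof -
  assume "step z z'"
  then obtain i x where h: "0 \<le> x" "x \<le> 1" "z = pt x i"
     "(x \<le> d i \<and> z' = pt (g1 i x) (i+1)) \<or> (x \<ge> d i \<and> z' = pt (g2 i x) (i+2))"
    by (rule step_cases)
  show ?thesis using h(4)
  proof
    assume a: "x \<le> d i \<and> z' = pt (g1 i x) (i+1)"
    then have "x < 1" using dr[of i] by linarith
    then show ?thesis using a g1_range[OF h(1)] by blast
  next
    assume a: "x \<ge> d i \<and> z' = pt (g2 i x) (i+2)"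
    then have "x > 0" using dr[of i] by linarith
    then show ?thesis using a g2_range[OF _ h(2)] by blast
  qed
qed

lemma step_exists: "0 \<le> x \<Longrightarrow> x \<le> 1 \<Longrightarrow> \<exists>y e. 0 \<le> y \<and> y \<le> 1 \<and> step (pt x i) (pt y e)"
proof -
  assume x: "0 \<le> x" "x \<le> 1"
  show ?thesis
  proof (cases "x \<le> d i")
    case True
    then have "x < 1" using dr[of i] by linarith
    then show ?thesis using step_I1[OF x True] g1_range[OF x(1)] by (meson less_imp_le)
  next
    case False
    then have "x > 0" using dr[of i] by linarith
    then show ?thesis using step_I2[OF x] False g2_range[OF _ x(2)] by (meson less_imp_le not_le)
  qed
qed

lemma g1_diff: "0 \<le> x \<Longrightarrow> x \<le> 1 \<Longrightarrow> 0 \<le> y \<Longrightarrow> y \<le> 1 \<Longrightarrow>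
  g1 i x - g1 i y = rho i * (1 - rho (i+1)) * (y - x) /
     (((1 - rho (i+1)) + theta rho * (1-x)) * ((1 - rho (i+1)) + theta rho * (1-y)))"
  using D1_pos[of x i] D1_pos[of y i] unfolding g1_def by (simp add: field_simps)

lemma g2_diff: "0 \<le> x \<Longrightarrow> x \<le> 1 \<Longrightarrow> 0 \<le> y \<Longrightarrow> y \<le> 1 \<Longrightarrow>
  g2 i x - g2 i y = rho i * (1 - rho (i+2)) * (y - x) /
     (((1 - rho (i+2)) + theta rho * x) * ((1 - rho (i+2)) + theta rho * y))"
proof -
  assume xy: "0 \<le> x" "x \<le> 1" "0 \<le> y" "y \<le> 1"
  define Ex where "Ex = (1 - rho (i+2)) + theta rho * x"
  define Ey where "Ey = (1 - rho (i+2)) + theta rho * y"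
  have E: "Ex > 0" "Ey > 0" using D2_pos xy unfolding Ex_def Ey_def by auto
  have "g2 i x - g2 i y = rho i * y / Ey - rho i * x / Ex" unfolding g2_def Ex_def Ey_def by simp
  also have "\<dots> = (rho i * y * Ex - rho i * x * Ey) / (Ey * Ex)" using E by (simp add: diff_frac_eq)
  also have "rho i * y * Ex - rho i * x * Ey = rho i * (1 - rho (i+2)) * (y - x)"
    unfolding Ex_def Ey_def by (simp add: algebra_simps)
  finally show ?thesis unfolding Ex_def Ey_def by (simp add: mult.commute)
qed

lemma contr_aux: fixes a r D1 D2 t :: real assumes "0 < a" "a \<le> 1" "0 < r" "r \<le> a" "a \<le> D1" "a \<le> D2"
  shows "\<bar>r * a * t / (D1 * D2)\<bar> \<le> \<bar>t\<bar>"
proof -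
  have "a * a \<le> D1 * D2" by (rule mult_mono) (use assms in auto)
  moreover have "r * a \<le> a * a" using assms by (intro mult_right_mono) auto
  ultimately have "r * a \<le> D1 * D2" by linarith
  moreover have "D1 * D2 > 0" using assms by simp
  ultimately have "r * a / (D1 * D2) \<le> 1" by simp
  moreover have "r * a / (D1 * D2) \<ge> 0" using assms by simp
  ultimately have "(r * a / (D1 * D2)) * \<bar>t\<bar> \<le> \<bar>t\<bar>"
    by (intro mult_left_le_one_le) auto
  moreover have "\<bar>r * a * t / (D1 * D2)\<bar> = (r * a / (D1 * D2)) * \<bar>t\<bar>"
    using assms by (simp add: abs_mult abs_divide)
  ultimately show ?thesis by simp
qed

lemma g1_lip: "0 \<le> x \<Longrightarrow> x \<le> 1 \<Longrightarrow> 0 \<le> y \<Longrightarrow> y \<le> 1 \<Longrightarrow> \<bar>g1 i x - g1 i y\<bar> \<le> \<bar>x - y\<bar>"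
  apply (subst g1_diff, assumption+)
  using contr_aux[of "1 - rho (i+1)" "rho i" "(1 - rho (i+1)) + theta rho * (1-x)"
      "(1 - rho (i+1)) + theta rho * (1-y)" "y - x"] rr[of i] rr[of "i+1"] rpi[of i] th_pos
  by (simp add: abs_minus_commute)

lemma g2_lip: "0 \<le> x \<Longrightarrow> x \<le> 1 \<Longrightarrow> 0 \<le> y \<Longrightarrow> y \<le> 1 \<Longrightarrow> \<bar>g2 i x - g2 i y\<bar> \<le> \<bar>x - y\<bar>"
  apply (subst g2_diff, assumption+)
  using contr_aux[of "1 - rho (i+2)" "rho i" "(1 - rho (i+2)) + theta rho * x"
      "(1 - rho (i+2)) + theta rho * y" "y - x"] rr[of i] rr[of "i+2"] rpi[of i] th_pos
  by (simp add: abs_minus_commute)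

lemma g1_inj: assumes "0 \<le> x" "x \<le> 1" "0 \<le> y" "y \<le> 1" "g1 i x = g1 i y" shows "x = y"
proof -
  have "rho i * (1 - rho (i+1)) * (y - x) /
     (((1 - rho (i+1)) + theta rho * (1-x)) * ((1 - rho (i+1)) + theta rho * (1-y))) = 0"
    using g1_diff[OF assms(1-4), of i] assms(5) by simp
  moreover have "((1 - rho (i+1)) + theta rho * (1-x)) * ((1 - rho (i+1)) + theta rho * (1-y)) \<noteq> 0"
    using D1_pos[of x i] D1_pos[of y i] assms by simp
  moreover have "rho i * (1 - rho (i+1)) \<noteq> 0" using rr[of i] rr[of "i+1"] by simp
  ultimately show ?thesis by simp
qed

lemma g2_inj: assumes "0 \<le> x" "x \<le> 1" "0 \<le> y" "y \<le> 1" "g2 i x = g2 i y" shows "x = y"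
proof -
  have "rho i * (1 - rho (i+2)) * (y - x) /
     (((1 - rho (i+2)) + theta rho * x) * ((1 - rho (i+2)) + theta rho * y)) = 0"
    using g2_diff[OF assms(1-4), of i] assms(5) by simp
  moreover have "((1 - rho (i+2)) + theta rho * x) * ((1 - rho (i+2)) + theta rho * y) \<noteq> 0"
    using D2_pos[of x i] D2_pos[of y i] assms by simp
  moreover have "rho i * (1 - rho (i+2)) \<noteq> 0" using rr[of i] rr[of "i+2"] by simp
  ultimately show ?thesis by simp
qed

lemma g1_cont: "continuous_on {0..1} (g1 i)"
  unfolding g1_def
  by (intro continuous_intros) (use D1_pos[of _ i] in fastforce)

lemma g2_cont: "continuous_on {0..1} (g2 i)"
  unfolding g2_def
  by (intro continuous_intros) (use D2_pos[of _ i] in fastforce)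


lemma g1_V: assumes "0 \<le> x" "x \<le> 1"
  shows "rho i - g1 i x * (rho i + rho (i+2)) = rho i * (1 - rho (i+1)) * x / ((1 - rho (i+1)) + theta rho * (1-x))"
proof -
  have D: "(1 - rho (i+1)) + theta rho * (1-x) > 0" using D1_pos assms by simp
  have th: "theta rho = rho i + rho (i+1) + rho (i+2) - 1" by (rule theta_i)
  show ?thesis using D unfolding g1_def by (simp add: field_simps th)
qed

lemma g2_V: assumes "0 \<le> x" "x \<le> 1"
  shows "g2 (i+2) x * (rho i + rho (i+2)) - rho i = rho (i+2) * (1 - rho (i+1)) * (1 - x) / ((1 - rho (i+1)) + theta rho * x)"
proof -
  define E where "E = (1 - rho (i+1)) + theta rho * x"
  have D: "E > 0" using D2_pos[OF assms, of "i+2"] unfolding E_def by simp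
  have th: "theta rho = rho i + rho (i+1) + rho (i+2) - 1" by (rule theta_i)
  have "g2 (i+2) x = 1 - rho (i+2) * x / E" unfolding g2_def E_def by simp
  then have "g2 (i+2) x * (rho i + rho (i+2)) - rho i = (1 - rho (i+2) * x / E) * (rho i + rho (i+2)) - rho i"
    by simp
  also have "\<dots> = (rho (i+2) * E - rho (i+2) * x * (rho i + rho (i+2))) / E"
    using D by (simp add: field_simps)
  also have "rho (i+2) * E - rho (i+2) * x * (rho i + rho (i+2)) = rho (i+2) * (1 - rho (i+1)) * (1 - x)"
    unfolding E_def th by (simp add: algebra_simps)
  finally show ?thesis unfolding E_def .
qed

lemma pt_corner: "pt 0 i = pt 1 (i+2)"
proof (subst vec_eq_iff, intro allI)
  fix k
  consider "k = i" | "k = i + 1" | "k = i + 2" using idx_cases[of k i] by auto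
  then show "pt 0 i $ k = pt 1 (i+2) $ k" by cases (simp_all add: pt_nth)
qed

lemma cross: assumes "0 \<le> x1" "x1 \<le> 1" "0 \<le> x2" "x2 \<le> 1" "g1 i x1 = g2 (i+2) x2"
  shows "pt x1 i = pt x2 (i+2)"
proof -
  have a: "rho i * (1 - rho (i+1)) * x1 / ((1 - rho (i+1)) + theta rho * (1-x1)) \<ge> 0"
    using D1_pos[of x1 i] assms rr[of i] rr[of "i+1"] by simp
  have b: "rho (i+2) * (1 - rho (i+1)) * (1 - x2) / ((1 - rho (i+1)) + theta rho * x2) \<ge> 0"
    using D2_pos[of x2 "i+2"] assms rr[of "i+2"] rr[of "i+1"] by simp
  have "rho i * (1 - rho (i+1)) * x1 / ((1 - rho (i+1)) + theta rho * (1-x1)) +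
        rho (i+2) * (1 - rho (i+1)) * (1 - x2) / ((1 - rho (i+1)) + theta rho * x2) = 0"
    using g1_V[OF assms(1,2), of i] g2_V[OF assms(3,4), of i] assms(5) by simp
  then have z1: "rho i * (1 - rho (i+1)) * x1 / ((1 - rho (i+1)) + theta rho * (1-x1)) = 0"
    and z2: "rho (i+2) * (1 - rho (i+1)) * (1 - x2) / ((1 - rho (i+1)) + theta rho * x2) = 0"
    using a b by linarith+
  have "x1 = 0" using z1 D1_pos[of x1 i] assms rr[of i] rr[of "i+1"] by simp
  moreover have "x2 = 1" using z2 D2_pos[of x2 "i+2"] assms rr[of "i+2"] rr[of "i+1"] by simp
  ultimately show ?thesis using pt_corner by simp
qed

lemma idx_12: "(i1::3) + 1 = i2 + 2 \<Longrightarrow> i2 = i1 + 2"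
  using exhaust_3[of i1] exhaust_3[of i2] by auto

lemma step_inj: assumes "step z1 y" "step z2 y" shows "z1 = z2"
proof -
  obtain i1 x1 where h1: "0 \<le> x1" "x1 \<le> 1" "z1 = pt x1 i1"
     "(x1 \<le> d i1 \<and> y = pt (g1 i1 x1) (i1+1)) \<or> (x1 \<ge> d i1 \<and> y = pt (g2 i1 x1) (i1+2))"
    by (rule step_cases[OF assms(1)])
  obtain i2 x2 where h2: "0 \<le> x2" "x2 \<le> 1" "z2 = pt x2 i2"
     "(x2 \<le> d i2 \<and> y = pt (g1 i2 x2) (i2+1)) \<or> (x2 \<ge> d i2 \<and> y = pt (g2 i2 x2) (i2+2))"
    by (rule step_cases[OF assms(2)])
  have r1: "x1 \<le> d i1 \<Longrightarrow> 0 < g1 i1 x1 \<and> g1 i1 x1 < 1" using g1_range[OF h1(1)] dr[of i1] by simp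
  have r2: "x1 \<ge> d i1 \<Longrightarrow> 0 < g2 i1 x1 \<and> g2 i1 x1 < 1" using g2_range[OF _ h1(2)] dr[of i1] by simp
  from h1(4) h2(4) show ?thesis
  proof (elim disjE conjE)
    assume a: "x1 \<le> d i1" "y = pt (g1 i1 x1) (i1 + 1)" "x2 \<le> d i2" "y = pt (g1 i2 x2) (i2 + 1)"
    then have "i2 + 1 = i1 + 1 \<and> g1 i2 x2 = g1 i1 x1" using pt_inj[of "g1 i1 x1" "i1+1"] r1 by metis
    then have e: "i2 = i1" "g1 i2 x2 = g1 i1 x1" by auto
    then show ?thesis using g1_inj[OF h1(1,2) h2(1,2), of i1] h1(3) h2(3) by metis
  next
    assume a: "x1 \<ge> d i1" "y = pt (g2 i1 x1) (i1 + 2)" "x2 \<ge> d i2" "y = pt (g2 i2 x2) (i2 + 2)"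
    then have "i2 + 2 = i1 + 2 \<and> g2 i2 x2 = g2 i1 x1" using pt_inj[of "g2 i1 x1" "i1+2"] r2 by metis
    then have e: "i2 = i1" "g2 i2 x2 = g2 i1 x1" by auto
    then show ?thesis using g2_inj[OF h1(1,2) h2(1,2), of i1] h1(3) h2(3) by metis
  next
    assume a: "x1 \<le> d i1" "y = pt (g1 i1 x1) (i1 + 1)" "x2 \<ge> d i2" "y = pt (g2 i2 x2) (i2 + 2)"
    then have e: "i2 + 2 = i1 + 1 \<and> g2 i2 x2 = g1 i1 x1" using pt_inj[of "g1 i1 x1" "i1+1"] r1 by metis
    then have "i2 = i1 + 2" using idx_12 by metis
    then show ?thesis using cross[OF h1(1,2) h2(1,2), of i1] e h1(3) h2(3) by simp
  next
    assume a: "x1 \<ge> d i1" "y = pt (g2 i1 x1) (i1 + 2)" "x2 \<le> d i2" "y = pt (g1 i2 x2) (i2 + 1)"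
    then have e: "i2 + 1 = i1 + 2 \<and> g1 i2 x2 = g2 i1 x1" using pt_inj[of "g2 i1 x1" "i1+2"] r2 by metis
    then have "i1 = i2 + 2" using idx_12 by metis
    then show ?thesis using cross[OF h2(1,2) h1(1,2), of i2] e h1(3) h2(3) by simp
  qed
qed


end


context sys begin
definition inA :: "real^3 \<Rightarrow> bool" where
  "inA z \<longleftrightarrow> (\<exists>x i. 0 \<le> x \<and> x \<le> 1 \<and> z = pt x i)"

lemma inA_step: "inA z \<Longrightarrow> \<exists>z'. step z z' \<and> inA z'"
  unfolding inA_def using step_exists by blast

definition nxt :: "real^3 \<Rightarrow> real^3" where
  "nxt z = (SOME z'. step z z' \<and> inA z')"

lemma nxt: "inA z \<Longrightarrow> step z (nxt z) \<and> inA (nxt z)"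
  unfolding nxt_def using inA_step by (rule someI_ex)

lemma traj_from: assumes "inA y" shows "\<forall>t. step ((nxt ^^ t) y) ((nxt ^^ Suc t) y)"
proof -
  have "inA ((nxt ^^ t) y)" for t by (induction t) (use assms nxt in auto)
  then show ?thesis using nxt by simp
qed

lemma traj_iff: "trajectory rho d zs \<longleftrightarrow> (\<forall>t. step (zs t) (zs (Suc t)))"
  unfolding trajectory_def step_def by simp

lemma preimage_iff: assumes "inA y"
  shows "preimage rho d z y \<longleftrightarrow> (\<exists>t\<ge>1. (step ^^ t) z y)"
proof
  assume "preimage rho d z y"
  then obtain zs t where h: "trajectory rho d zs" "zs 0 = z" "t \<ge> 1" "zs t = y"
    unfolding preimage_def by blast
  have "(step ^^ n) (zs 0) (zs n)" for n
    by (induction n) (use h(1) traj_iff in \<open>auto intro: relpowp_Suc_I\<close>)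
  then show "\<exists>t\<ge>1. (step ^^ t) z y" using h by metis
next
  assume "\<exists>t\<ge>1. (step ^^ t) z y"
  then obtain t where t: "t \<ge> 1" "(step ^^ t) z y" by blast
  then obtain f where f: "f 0 = z" "f t = y" "\<forall>i<t. step (f i) (f (Suc i))"
    unfolding relpowp_fun_conv by blast
  define zs where "zs k = (if k \<le> t then f k else (nxt ^^ (k - t)) y)" for k
  have "step (zs k) (zs (Suc k))" for k
  proof (cases "Suc k \<le> t")
    case True then show ?thesis using f(3) unfolding zs_def by simp
  next
    case False
    then have "k \<ge> t" by simp
    then show ?thesis using traj_from[OF assms, rule_format, of "k - t"] f(2)
      unfolding zs_def by (cases "k = t") (auto simp: Suc_diff_le)
  qed
  then have "trajectory rho d zs" using traj_iff by blast
  moreover have "zs 0 = z" "zs t = y" using f unfolding zs_def by auto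
  ultimately show "preimage rho d z y" unfolding preimage_def using t(1) by blast
qed

lemma inA_dpt: "inA (dpt d e)" unfolding inA_def dpt_def using dr[of e] by (intro exI[of _ "d e"] exI[of _ e]) auto

lemma relpow_uniq: "(step ^^ t) z y \<Longrightarrow> (step ^^ t) z' y \<Longrightarrow> z = z'"
proof (induction t arbitrary: z z')
  case 0 then show ?case by simp
next
  case (Suc t)
  from Suc.prems(1) obtain y1 where y1: "step z y1" "(step ^^ t) y1 y" by (rule relpowp_Suc_E2)
  from Suc.prems(2) obtain y2 where y2: "step z' y2" "(step ^^ t) y2 y" by (rule relpowp_Suc_E2)
  have "y1 = y2" using Suc.IH y1(2) y2(2) by blast
  then show ?case using step_inj y1(1) y2(1) by blast
qed

lemma finite_subsingleton: "(\<And>a b. P a \<Longrightarrow> P b \<Longrightarrow> a = b) \<Longrightarrow> finite {z. P z}"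
proof (cases "\<exists>a. P a")
  case True
  assume h: "\<And>a b. P a \<Longrightarrow> P b \<Longrightarrow> a = b"
  then obtain a where "P a" using True by blast
  then have "{z. P z} \<subseteq> {a}" using h by blast
  then show ?thesis using finite_subset by blast
qed simp

end


locale sys2 = sys +
  assumes inf1: "infinite {z. preimage rho d z (dpt d 1)}"
    and fin2: "finite {z. preimage rho d z (dpt d 2)}"
    and fin3: "finite {z. preimage rho d z (dpt d 3)}"
begin

abbreviation "D1 \<equiv> dpt d 1"

lemma pre_exists: "\<exists>z. (step ^^ t) z D1"
proof (rule ccontr)
  assume no: "\<not> (\<exists>z. (step ^^ t) z D1)"
  have no2: "\<not> (step ^^ s) z D1" if "s \<ge> t" for s z
  proof
    assume "(step ^^ s) z D1"
    then have "((step ^^ (s - t)) OO (step ^^ t)) z D1" using that relpowp_add[of "s - t" t step] by simp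
    then show False using no by blast
  qed
  have "{z. preimage rho d z D1} \<subseteq> (\<Union>s<t. {z. (step ^^ s) z D1})"
  proof
    fix z assume "z \<in> {z. preimage rho d z D1}"
    then obtain s where s: "s \<ge> 1" "(step ^^ s) z D1" using preimage_iff[OF inA_dpt] by blast
    then have "s < t" using no2 not_le by blast
    then show "z \<in> (\<Union>s<t. {z. (step ^^ s) z D1})" using s by blast
  qed
  moreover have "finite (\<Union>s<t. {z. (step ^^ s) z D1})"
    using relpow_uniq by (intro finite_UN_I) (auto intro: finite_subsingleton)
  ultimately show False using inf1 finite_subset by blast
qed

definition w :: "nat \<Rightarrow> real^3" where
  "w t = (THE z. (step ^^ t) z D1)"

lemma w_rel: "(step ^^ t) (w t) D1"
proof -
  have "\<exists>!z. (step ^^ t) z D1" using pre_exists relpow_uniq by blast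
  then show ?thesis unfolding w_def by (rule theI')
qed

lemma w_uniq: "(step ^^ t) z D1 \<Longrightarrow> z = w t"
  using w_rel relpow_uniq by blast

lemma w0: "w 0 = D1" using w_uniq[where z=D1 and t=0] by simp

lemma w_step: "step (w (Suc t)) (w t)"
proof -
  from w_rel[of "Suc t"] obtain y where "step (w (Suc t)) y" "(step ^^ t) y D1" by (rule relpowp_Suc_E2)
  then show ?thesis using w_uniq by blast
qed

lemma P1_eq: "P1 rho d = range w"
proof
  show "P1 rho d \<subseteq> range w"
  proof
    fix z assume "z \<in> P1 rho d"
    then have "z = D1 \<or> preimage rho d z D1" unfolding P1_def by blast
    then show "z \<in> range w"
    proof
      assume "z = D1" then show ?thesis using w0 by (metis rangeI)
    next
      assume "preimage rho d z D1"
      then obtain s where "(step ^^ s) z D1" using preimage_iff[OF inA_dpt] by blast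
      then show ?thesis using w_uniq by blast
    qed
  qed
  show "range w \<subseteq> P1 rho d"
  proof
    fix z assume "z \<in> range w"
    then obtain t where t: "z = w t" by blast
    show "z \<in> P1 rho d"
    proof (cases t)
      case 0 then show ?thesis using t w0 unfolding P1_def by simp
    next
      case (Suc s)
      have "(step ^^ t) z D1" unfolding t by (rule w_rel)
      moreover have "t \<ge> 1" using Suc by simp
      ultimately have "preimage rho d z D1" using preimage_iff[OF inA_dpt] by blast
      then show ?thesis unfolding P1_def by simp
    qed
  qed
qed

lemma w_inj: "inj w"
proof (rule ccontr)
  assume "\<not> inj w"
  then obtain s0 t0 where st0: "w s0 = w t0" "s0 \<noteq> t0" unfolding inj_def by blast
  obtain s t where st: "w s = w t" "s < t"
  proof (cases "s0 < t0")
    case True then show ?thesis using that st0 by blast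
  next
    case False then have "t0 < s0" using st0(2) by simp
    then show ?thesis using that st0 by (metis)
  qed
  have per: "w (s + q) = w (t + q)" for q
  proof (induction q)
    case 0 then show ?case using st by simp
  next
    case (Suc q)
    have "step (w (Suc (s + q))) (w (s + q))" "step (w (Suc (t + q))) (w (s + q))"
      using w_step Suc.IH by metis+
    then show ?case using step_inj by simp
  qed
  have "w n \<in> w ` {..<t}" for n
  proof (induction n rule: less_induct)
    case (less n)
    show ?case
    proof (cases "n < t")
      case True then show ?thesis by simp
    next
      case False
      then have "w n = w (s + (n - t))" using per[of "n - t"] by simp
      moreover have "s + (n - t) < n" using False st(2) by simp
      ultimately show ?thesis using less by simp
    qed
  qed
  then have "range w \<subseteq> w ` {..<t}" by blast
  then have "finite (range w)" using finite_subset by blast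
  then have "finite (P1 rho d)" using P1_eq by simp
  then show False using inf1 unfolding P1_def by simp
qed

lemma w_par: "\<exists>y e. 0 < y \<and> y < 1 \<and> w t = pt y e"
  using step_image[OF w_step[of t]] .

end



lemma ivt_between:
  fixes f :: "real \<Rightarrow> real"
  assumes c: "continuous_on {min p q..max p q} f" and y: "min (f p) (f q) \<le> y" "y \<le> max (f p) (f q)"
  shows "\<exists>x. min p q \<le> x \<and> x \<le> max p q \<and> f x = y"
proof -
  consider "f (min p q) \<le> y \<and> y \<le> f (max p q)" | "f (max p q) \<le> y \<and> y \<le> f (min p q)"
    using y by (cases "p \<le> q") (auto simp: min_def max_def split: if_splits)
  then show ?thesis
  proof cases
    case 1 then show ?thesis using IVT'[of f "min p q" y "max p q"] c by auto
  next
    case 2 then show ?thesis using IVT2'[of f "max p q" y "min p q"] c by auto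
  qed
qed

lemma pt_dist: "dist (pt x e) (pt y e) \<le> 2 * \<bar>x - y\<bar>"
proof -
  have "pt x e - pt y e = (y - x) *\<^sub>R axis (e+1) 1 + (x - y) *\<^sub>R axis (e+2) (1::real)"
    unfolding pt_def by (simp add: scaleR_diff_left scaleR_diff_right)
  then have "dist (pt x e) (pt y e) = norm ((y - x) *\<^sub>R axis (e+1) 1 + (x - y) *\<^sub>R axis (e+2) (1::real))"
    by (simp add: dist_norm)
  also have "\<dots> \<le> norm ((y - x) *\<^sub>R axis (e+1) (1::real)) + norm ((x - y) *\<^sub>R axis (e+2) (1::real))"
    by (rule norm_triangle_ineq)
  also have "\<dots> = 2 * \<bar>x - y\<bar>" by simp
  finally show ?thesis .
qed

context sys2 begin

lemma w_limpt: "w k islimpt range w"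
proof (unfold islimpt_approachable, intro allI impI)
  fix \<epsilon> :: real assume \<epsilon>: "\<epsilon> > 0"
  define T where "T i = {y. 0 < y \<and> y < 1 \<and> pt y i \<in> range w}" for i
  have "\<exists>i. infinite (T i)"
  proof (rule ccontr)
    assume "\<not> (\<exists>i. infinite (T i))"
    then have fin: "finite (T i)" for i by blast
    have "range w \<subseteq> (\<Union>i. (\<lambda>y. pt y i) ` T i)"
    proof
      fix z assume "z \<in> range w"
      then obtain t where zt: "z = w t" by blast
      obtain y e where "0 < y" "y < 1" "w t = pt y e" using w_par by blast
      then have "y \<in> T e" unfolding T_def by (metis (mono_tags, lifting) mem_Collect_eq rangeI)
      then show "z \<in> (\<Union>i. (\<lambda>y. pt y i) ` T i)" using zt \<open>w t = pt y e\<close> by blast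
    qed
    moreover have "finite (\<Union>i. (\<lambda>y. pt y i) ` T i)" using fin by simp
    ultimately have "finite (range w)" using finite_subset by blast
    then have "finite (UNIV :: nat set)" using w_inj by (metis finite_imageD)
    then show False by simp
  qed
  then obtain i where Ti: "infinite (T i)" by blast
  have "T i \<subseteq> {0..1}" unfolding T_def by auto
  then obtain xs where xs: "xs \<in> {0..1}" "xs islimpt T i"
    using Ti compact_eq_Bolzano_Weierstrass[of "{0..1::real}"] compact_Icc by blast
  define Bad where "Bad = w ` {..k} \<union> {dpt d 2, dpt d 3} \<union> {z. preimage rho d z (dpt d 2)}
      \<union> {z. preimage rho d z (dpt d 3)}"
  have finBad: "finite Bad" unfolding Bad_def using fin2 fin3 by simp
  define B where "B = {y. pt y i \<in> Bad}"
  have injpt: "inj (\<lambda>y. pt y i)" using pt_inj_same by (auto intro: injI)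
  have finB: "finite B" unfolding B_def using finite_vimageI[OF finBad injpt] by (simp add: vimage_def)
  define \<delta> where "\<delta> = Min (insert (\<epsilon>/8) ((\<lambda>b. \<bar>b - xs\<bar>) ` (B - {xs})))"
  have \<delta>pos: "\<delta> > 0" unfolding \<delta>_def using finB \<epsilon> by (subst Min_gr_iff) auto
  have \<delta>le: "\<delta> \<le> \<epsilon>/8" unfolding \<delta>_def using finB by (intro Min_le) auto
  have \<delta>B: "\<delta> \<le> \<bar>b - xs\<bar>" if "b \<in> B" "b \<noteq> xs" for b
    unfolding \<delta>_def using finB that by (intro Min_le) auto
  have inf_ball: "infinite (T i \<inter> ball xs \<delta>)" using xs(2) \<delta>pos islimpt_eq_infinite_ball by blast
  have cover: "T i \<inter> ball xs \<delta> \<subseteq> {xs} \<union> (T i \<inter> {xs - \<delta><..<xs}) \<union> (T i \<inter> {xs<..<xs+\<delta>})"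
    by (auto simp: dist_real_def ball_def abs_less_iff)
  obtain lo hi where J: "hi - lo = \<delta>" "infinite (T i \<inter> {lo<..<hi})" "lo = xs \<or> hi = xs"
  proof (cases "infinite (T i \<inter> {xs - \<delta><..<xs})")
    case True show ?thesis by (rule that[where lo = "xs - \<delta>" and hi = xs]) (use True in auto)
  next
    case False
    have "infinite (T i \<inter> {xs<..<xs+\<delta>})"
    proof
      assume "finite (T i \<inter> {xs<..<xs+\<delta>})"
      then have "finite ({xs} \<union> (T i \<inter> {xs - \<delta><..<xs}) \<union> (T i \<inter> {xs<..<xs+\<delta>}))" using False by simp
      then show False using inf_ball cover finite_subset by blast
    qed
    then show ?thesis by (intro that[where lo = xs and hi = "xs + \<delta>"]) auto
  qed
  have JB: "y \<notin> B" if "lo < y" "y < hi" for y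
  proof
    assume "y \<in> B"
    moreover have "y \<noteq> xs" "\<bar>y - xs\<bar> < \<delta>" using that J by auto
    ultimately show False using \<delta>B by force
  qed
  define S where "S = {m. \<exists>y. lo < y \<and> y < hi \<and> 0 < y \<and> y < 1 \<and> w m = pt y i}"
  have infS: "infinite S"
  proof
    assume fS: "finite S"
    have "T i \<inter> {lo<..<hi} \<subseteq> (\<Union>m\<in>S. {y. w m = pt y i})"
    proof
      fix y assume y: "y \<in> T i \<inter> {lo<..<hi}"
      then obtain m where m: "pt y i = w m" unfolding T_def by auto
      then have "m \<in> S" unfolding S_def using y unfolding T_def by auto
      then show "y \<in> (\<Union>m\<in>S. {y. w m = pt y i})" using m by auto
    qed
    moreover have "finite (\<Union>m\<in>S. {y. w m = pt y i})"
      by (intro finite_UN_I fS finite_subsingleton) (metis pt_inj_same)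
    ultimately show False using J(2) finite_subset by blast
  qed
  define a where "a = (LEAST m. m \<in> S)"
  have "S \<noteq> {}" using infS by auto
  then have aS: "a \<in> S" unfolding a_def by (metis LeastI ex_in_conv)
  have notS: "r \<notin> S" if "r < a" for r using not_less_Least that unfolding a_def by blast
  have "infinite (S - {a})" using infS by simp
  then obtain b where bS: "b \<in> S" "b \<noteq> a" by (metis Diff_iff finite.emptyI insertCI ex_in_conv)
  have ab: "a < b" using bS notS by (meson linorder_neqE_nat)
  obtain xa where xa: "lo < xa" "xa < hi" "0 < xa" "xa < 1" "w a = pt xa i" using aS unfolding S_def by blast
  obtain xb where xb: "lo < xb" "xb < hi" "0 < xb" "xb < 1" "w b = pt xb i" using bS unfolding S_def by blast
  have ka: "k < a"
  proof (rule ccontr)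
    assume "\<not> k < a" then have "a \<le> k" by simp
    then have "w a \<in> Bad" unfolding Bad_def by auto
    then have "xa \<in> B" unfolding B_def using xa by simp
    then show False using JB xa by blast
  qed
  have xab: "\<bar>xa - xb\<bar> < \<delta>" using xa xb J(1) by auto
  have xJ: "lo < x \<and> x < hi \<and> 0 < x \<and> x < 1" if "min xa xb \<le> x" "x \<le> max xa xb" for x
    using that xa xb by auto
  have Inv: "\<exists>e \<alpha> \<beta>. w (a - r) = pt \<alpha> e \<and> w (b - r) = pt \<beta> e \<and> 0 < \<alpha> \<and> \<alpha> < 1 \<and> 0 < \<beta> \<and> \<beta> < 1
      \<and> \<bar>\<alpha> - \<beta>\<bar> \<le> \<bar>xa - xb\<bar> \<and>
       (\<forall>y. min \<alpha> \<beta> \<le> y \<and> y \<le> max \<alpha> \<beta> \<longrightarrow>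
          (\<exists>x. min xa xb \<le> x \<and> x \<le> max xa xb \<and> (step ^^ r) (pt x i) (pt y e)))"
    if "r \<le> a - k" for r
    using that
  proof (induction r)
    case 0
    have all: "\<forall>y. min xa xb \<le> y \<and> y \<le> max xa xb \<longrightarrow>
          (\<exists>x. min xa xb \<le> x \<and> x \<le> max xa xb \<and> (step ^^ 0) (pt x i) (pt y i))" by auto
    have "w (a - 0) = pt xa i" "w (b - 0) = pt xb i" using xa xb by simp_all
    then show ?case using xa xb all by (intro exI[of _ i] exI[of _ xa] exI[of _ xb] conjI) simp_all
  next
    case (Suc r)
    then have ra: "r < a - k" by simp
    then obtain e \<alpha> \<beta> where I: "w (a - r) = pt \<alpha> e" "w (b - r) = pt \<beta> e" "0 < \<alpha>" "\<alpha> < 1" "0 < \<beta>" "\<beta> < 1"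
        "\<bar>\<alpha> - \<beta>\<bar> \<le> \<bar>xa - xb\<bar>"
      and Iy: "\<And>y. min \<alpha> \<beta> \<le> y \<Longrightarrow> y \<le> max \<alpha> \<beta> \<Longrightarrow>
          \<exists>x. min xa xb \<le> x \<and> x \<le> max xa xb \<and> (step ^^ r) (pt x i) (pt y e)"
      using Suc.IH by auto
    have nd: "\<not> (min \<alpha> \<beta> \<le> d e \<and> d e \<le> max \<alpha> \<beta>)"
    proof
      assume h: "min \<alpha> \<beta> \<le> d e \<and> d e \<le> max \<alpha> \<beta>"
      have "\<exists>x. min xa xb \<le> x \<and> x \<le> max xa xb \<and> (step ^^ r) (pt x i) (pt (d e) e)"
        using Iy[of "d e"] h by blast
      then obtain x where x: "min xa xb \<le> x" "x \<le> max xa xb" "(step ^^ r) (pt x i) (pt (d e) e)"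
        by blast
      have x3: "(step ^^ r) (pt x i) (dpt d e)" using x(3) by (simp add: dpt_def)
      have xj: "lo < x" "x < hi" "0 < x" "x < 1" using xJ[OF x(1,2)] by auto
      have bad: "pt x i \<in> Bad" if e23: "e = 2 \<or> e = 3"
      proof (cases r)
        case 0
        then have "pt x i = dpt d e" using x3 by simp
        then show ?thesis using e23 unfolding Bad_def by blast
      next
        case (Suc r')
        have "\<exists>t\<ge>1. (step ^^ t) (pt x i) (dpt d e)" using x3 Suc by (intro exI[of _ r]) simp
        then have "preimage rho d (pt x i) (dpt d e)" using preimage_iff[OF inA_dpt] by blast
        then show ?thesis using e23 unfolding Bad_def by blast
      qed
      consider "e = 1" | "e = 2 \<or> e = 3" using exhaust_3 by blast
      then show False
      proof cases
        case 1
        then have "(step ^^ r) (pt x i) D1" using x3 by simp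
        then have "pt x i = w r" by (rule w_uniq)
        then have "r \<in> S" unfolding S_def using xj by (intro CollectI exI[of _ x]) auto
        moreover have "r < a" using ra by simp
        ultimately show False using notS by blast
      next
        case 2
        then have "x \<in> B" using bad unfolding B_def by simp
        then show False using JB xj by blast
      qed
    qed
    have aS': "a - r = Suc (a - Suc r)" and bS': "b - r = Suc (b - Suc r)" using ra ab by auto
    have sa: "step (pt \<alpha> e) (w (a - Suc r))" using w_step[of "a - Suc r"] I(1) aS' by simp
    have sb: "step (pt \<beta> e) (w (b - Suc r))" using w_step[of "b - Suc r"] I(2) bS' by simp
    consider (L) "max \<alpha> \<beta> < d e" | (R) "min \<alpha> \<beta> > d e" using nd by linarith
    then show ?case
    proof cases
      case L
      then have lt: "\<alpha> < d e" "\<beta> < d e" by auto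
      have wa: "w (a - Suc r) = pt (g1 e \<alpha>) (e+1)" using step_lt[OF I(3) lt(1) sa] by simp
      have wb: "w (b - Suc r) = pt (g1 e \<beta>) (e+1)" using step_lt[OF I(5) lt(2) sb] by simp
      have rga: "0 < g1 e \<alpha> \<and> g1 e \<alpha> < 1" by (rule g1_range) (use I in auto)
      have rgb: "0 < g1 e \<beta> \<and> g1 e \<beta> < 1" by (rule g1_range) (use I in auto)
      have rg: "0 < g1 e \<alpha>" "g1 e \<alpha> < 1" "0 < g1 e \<beta>" "g1 e \<beta> < 1" using rga rgb by auto
      have "\<bar>g1 e \<alpha> - g1 e \<beta>\<bar> \<le> \<bar>\<alpha> - \<beta>\<bar>" by (rule g1_lip) (use I in auto)
      then have lip: "\<bar>g1 e \<alpha> - g1 e \<beta>\<bar> \<le> \<bar>xa - xb\<bar>" using I(7) by linarith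
      have sub: "{min \<alpha> \<beta>..max \<alpha> \<beta>} \<subseteq> {0..1}" using I by auto
      have cont: "continuous_on {min \<alpha> \<beta>..max \<alpha> \<beta>} (g1 e)"
        by (rule continuous_on_subset[OF g1_cont sub])
      have Iy': "\<exists>x. min xa xb \<le> x \<and> x \<le> max xa xb \<and> (step ^^ Suc r) (pt x i) (pt y' (e+1))"
        if yh: "min (g1 e \<alpha>) (g1 e \<beta>) \<le> y'" "y' \<le> max (g1 e \<alpha>) (g1 e \<beta>)" for y'
      proof -
        obtain y where y: "min \<alpha> \<beta> \<le> y" "y \<le> max \<alpha> \<beta>" "g1 e y = y'"
          using ivt_between[OF cont yh] by blast
        obtain x where x: "min xa xb \<le> x" "x \<le> max xa xb" "(step ^^ r) (pt x i) (pt y e)"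
          using Iy[OF y(1,2)] by blast
        have yy: "0 \<le> y" "y \<le> 1" "y \<le> d e" using y I L by auto
        have "step (pt y e) (pt (g1 e y) (e+1))" by (rule step_I1[OF yy])
        then have "step (pt y e) (pt y' (e+1))" using y(3) by simp
        then have "(step ^^ Suc r) (pt x i) (pt y' (e+1))" by (rule relpowp_Suc_I[OF x(3)])
        then show ?thesis using x(1,2) by blast
      qed
      have all: "\<forall>y. min (g1 e \<alpha>) (g1 e \<beta>) \<le> y \<and> y \<le> max (g1 e \<alpha>) (g1 e \<beta>) \<longrightarrow>
          (\<exists>x. min xa xb \<le> x \<and> x \<le> max xa xb \<and> (step ^^ Suc r) (pt x i) (pt y (e+1)))"
        using Iy' by blast
      show ?thesis
        by (intro exI[of _ "e+1"] exI[of _ "g1 e \<alpha>"] exI[of _ "g1 e \<beta>"] conjI) (fact wa wb rg lip all)+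
    next
      case R
      then have gt: "\<alpha> > d e" "\<beta> > d e" by auto
      have wa: "w (a - Suc r) = pt (g2 e \<alpha>) (e+2)" using step_gt[OF I(4) gt(1) sa] by simp
      have wb: "w (b - Suc r) = pt (g2 e \<beta>) (e+2)" using step_gt[OF I(6) gt(2) sb] by simp
      have rga: "0 < g2 e \<alpha> \<and> g2 e \<alpha> < 1" by (rule g2_range) (use I in auto)
      have rgb: "0 < g2 e \<beta> \<and> g2 e \<beta> < 1" by (rule g2_range) (use I in auto)
      have rg: "0 < g2 e \<alpha>" "g2 e \<alpha> < 1" "0 < g2 e \<beta>" "g2 e \<beta> < 1" using rga rgb by auto
      have "\<bar>g2 e \<alpha> - g2 e \<beta>\<bar> \<le> \<bar>\<alpha> - \<beta>\<bar>" by (rule g2_lip) (use I in auto)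
      then have lip: "\<bar>g2 e \<alpha> - g2 e \<beta>\<bar> \<le> \<bar>xa - xb\<bar>" using I(7) by linarith
      have sub: "{min \<alpha> \<beta>..max \<alpha> \<beta>} \<subseteq> {0..1}" using I by auto
      have cont: "continuous_on {min \<alpha> \<beta>..max \<alpha> \<beta>} (g2 e)"
        by (rule continuous_on_subset[OF g2_cont sub])
      have Iy': "\<exists>x. min xa xb \<le> x \<and> x \<le> max xa xb \<and> (step ^^ Suc r) (pt x i) (pt y' (e+2))"
        if yh: "min (g2 e \<alpha>) (g2 e \<beta>) \<le> y'" "y' \<le> max (g2 e \<alpha>) (g2 e \<beta>)" for y'
      proof -
        obtain y where y: "min \<alpha> \<beta> \<le> y" "y \<le> max \<alpha> \<beta>" "g2 e y = y'"
          using ivt_between[OF cont yh] by blast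
        obtain x where x: "min xa xb \<le> x" "x \<le> max xa xb" "(step ^^ r) (pt x i) (pt y e)"
          using Iy[OF y(1,2)] by blast
        have yy: "0 \<le> y" "y \<le> 1" "y \<ge> d e" using y I R by auto
        have "step (pt y e) (pt (g2 e y) (e+2))" by (rule step_I2[OF yy])
        then have "step (pt y e) (pt y' (e+2))" using y(3) by simp
        then have "(step ^^ Suc r) (pt x i) (pt y' (e+2))" by (rule relpowp_Suc_I[OF x(3)])
        then show ?thesis using x(1,2) by blast
      qed
      have all: "\<forall>y. min (g2 e \<alpha>) (g2 e \<beta>) \<le> y \<and> y \<le> max (g2 e \<alpha>) (g2 e \<beta>) \<longrightarrow>
          (\<exists>x. min xa xb \<le> x \<and> x \<le> max xa xb \<and> (step ^^ Suc r) (pt x i) (pt y (e+2)))"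
        using Iy' by blast
      show ?thesis
        by (intro exI[of _ "e+2"] exI[of _ "g2 e \<alpha>"] exI[of _ "g2 e \<beta>"] conjI) (fact wa wb rg lip all)+
    qed
  qed
  from Inv[of "a - k"] obtain e \<alpha> \<beta> where F: "w (a - (a - k)) = pt \<alpha> e" "w (b - (a - k)) = pt \<beta> e"
    "\<bar>\<alpha> - \<beta>\<bar> \<le> \<bar>xa - xb\<bar>" by auto
  have akk: "a - (a - k) = k" using ka by simp
  define m where "m = b - (a - k)"
  have mk: "m \<noteq> k" using ab ka unfolding m_def by simp
  have "w m \<noteq> w k" using w_inj mk by (simp add: inj_eq)
  moreover have "dist (w m) (w k) < \<epsilon>"
  proof -
    have "dist (w m) (w k) = dist (pt \<beta> e) (pt \<alpha> e)" using F akk unfolding m_def by simp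
    also have "\<dots> \<le> 2 * \<bar>\<beta> - \<alpha>\<bar>" by (rule pt_dist)
    also have "\<dots> < \<epsilon>" using F(3) xab \<delta>le \<epsilon> by (simp add: abs_minus_commute)
    finally show ?thesis .
  qed
  ultimately show "\<exists>x'\<in>range w. x' \<noteq> w k \<and> dist x' (w k) < \<epsilon>" by blast
qed

end



lemma perfect_uncountable:
  fixes S :: "'a::{real_normed_vector,heine_borel} set"
  assumes cl: "closed S" and ne: "S \<noteq> {}" and lp: "\<And>x. x \<in> S \<Longrightarrow> x islimpt S"
  shows "uncountable S"
proof
  assume cS: "countable S"
  define G where "G = (\<lambda>x. S - {x}) ` S"
  have cG: "countable G" unfolding G_def using cS by simp
  have H: "openin (top_of_set S) T \<and> S \<subseteq> closure T" if "T \<in> G" for T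
  proof -
    obtain x where x: "T = S - {x}" "x \<in> S" using \<open>T \<in> G\<close> unfolding G_def by (rule imageE)
    have "openin (top_of_set S) (S \<inter> (- {x}))" by (rule openin_open_Int) (simp add: open_Compl)
    moreover have "T = S \<inter> (- {x})" using x(1) by (simp add: Diff_eq)
    ultimately have o: "openin (top_of_set S) T" by simp
    have "S \<subseteq> closure (S - {x})"
    proof
      fix y assume y: "y \<in> S"
      show "y \<in> closure (S - {x})"
      proof (cases "y = x")
        case True
        have "y islimpt S" using lp[OF y] .
        then have "y \<in> closure (S - {y})" using islimpt_in_closure[of y S] by simp
        then show ?thesis using True by simp
      next
        case False
        then have "y \<in> S - {x}" using y by simp
        then show ?thesis by (meson closure_subset subsetD)
      qed
    qed
    then show ?thesis using o x(1) by simp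
  qed
  have "S \<subseteq> closure (\<Inter>G)" by (rule Baire[OF cl cG H])
  moreover have "\<Inter>G = {}"
  proof -
    obtain x0 where x0: "x0 \<in> S" using ne by blast
    have "y \<notin> \<Inter>G" for y
    proof
      assume y: "y \<in> \<Inter>G"
      have "S - {x0} \<in> G" unfolding G_def using x0 by blast
      then have "y \<in> S - {x0}" by (rule InterD[OF y])
      then have yS: "y \<in> S" by simp
      have "S - {y} \<in> G" unfolding G_def using yS by blast
      then have "y \<in> S - {y}" by (rule InterD[OF y])
      then show False by simp
    qed
    then show ?thesis by blast
  qed
  ultimately show False using ne by simp
qed




theorem corollary5p1:
  fixes rho d :: "3 \<Rightarrow> real"
  assumes rho_range: "\<And>i. 0 < rho i \<and> rho i < 1"
    and rho_sum: "rho 1 + rho 2 + rho 3 > 1"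
    and rho_pair: "\<And>i j. i \<noteq> j \<Longrightarrow> rho i + rho j \<le> 1"
    and d_range: "\<And>i. 0 < d i \<and> d i < 1"
    and inf1: "infinite {z. preimage rho d z (dpt d 1)}"
    and fin2: "finite {z. preimage rho d z (dpt d 2)}"
    and fin3: "finite {z. preimage rho d z (dpt d 3)}"
  shows "perfect_set (closure (P1 rho d)) \<and> uncountable (closure (P1 rho d))
         \<and> uncountable (closure (P1 rho d) - P1 rho d)"
proof -
  interpret sys2 rho d
    by unfold_locales (use assms in auto)
  have P: "P1 rho d = range w" by (rule P1_eq)
  have lim: "x islimpt P1 rho d" if "x \<in> P1 rho d" for x
    using that w_limpt unfolding P by blast
  have lim2: "x islimpt closure (P1 rho d)" if "x \<in> closure (P1 rho d)" for x
  proof (cases "x \<in> P1 rho d")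
    case True
    then show ?thesis using lim islimpt_subset closure_subset by blast
  next
    case False
    then have "x islimpt P1 rho d" using that unfolding closure_def by blast
    then show ?thesis using islimpt_subset closure_subset by blast
  qed
  have perf: "perfect_set (closure (P1 rho d))"
    unfolding perfect_set_def using lim2 by simp
  have ne: "closure (P1 rho d) \<noteq> {}" using closure_subset unfolding P by blast
  have unc: "uncountable (closure (P1 rho d))"
    by (rule perfect_uncountable) (use lim2 ne in auto)
  have cP: "countable (P1 rho d)" unfolding P by simp
  have "uncountable (closure (P1 rho d) - P1 rho d)"
  proof
    assume c: "countable (closure (P1 rho d) - P1 rho d)"
    have sub: "closure (P1 rho d) \<subseteq> (closure (P1 rho d) - P1 rho d) \<union> P1 rho d" by blast
    have "countable (closure (P1 rho d))" by (rule countable_subset[OF sub countable_Un[OF c cP]])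
    then show False using unc by simp
  qed
  then show ?thesis using perf unc by simp
qed


end
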